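(* Let $m\ge3$ be odd, $n\ge2$, and let $\mathbf{c}=(c_1,\dots,c_n)^\top$ have all components positive and pairwise distinct. Let $\mathcal{A}=(a_{i_1\dots i_m})$ be the $m$th order $n$-dimensional tensor with $a_{i_1\dots i_m}=\frac{1}{c_{i_1}+\cdots+c_{i_m}}$. Then $\mathcal{A}$ is strongly positive definite.
   Context: For $\mathbf{x}\in\mathbb{R}^n$, $\mathcal{A}\mathbf{x}^{m-1}$ is the vector with $i$th component $\sum_{i_2,\dots,i_m}a_{ii_2\dots i_m}x_{i_2}\cdots x_{i_m}$. For odd $m$ and symmetric $\mathcal{A}$, $\mathcal{A}$ is strongly positive definite if $\mathcal{A}\mathbf{x}^{m-1}>\mathbf{0}$ componentwise for all nonzero $\mathbf{x}\in\mathbb{R}^n$. *)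

theory Defs
  imports "HOL-Analysis.Analysis" "HOL-Library.Multiset"
begin

text \<open>An m-th order n-dimensional real tensor is represented as a function on index
  lists; only index lists of length m with entries in {0..<n} are relevant
  (indices are 0-based). Vectors in R^n are functions nat => real, components i < n.\<close>

definition index_tuples :: "nat \<Rightarrow> nat \<Rightarrow> nat list set" where
  "index_tuples k n = {is. length is = k \<and> set is \<subseteq> {..<n}}"

text \<open>(A x^(m-1))_i = sum over i2..im of a_{i i2 .. im} x_{i2} ... x_{im}\<close>
definition tensor_apply :: "nat \<Rightarrow> nat \<Rightarrow> (nat list \<Rightarrow> real) \<Rightarrow> (nat \<Rightarrow> real) \<Rightarrow> nat \<Rightarrow> real" where
  "tensor_apply m n A x i = (\<Sum>is\<in>index_tuples (m - 1) n. A (i # is) * (\<Prod>j\<leftarrow>is. x j))"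

definition symmetric_tensor :: "nat \<Rightarrow> nat \<Rightarrow> (nat list \<Rightarrow> real) \<Rightarrow> bool" where
  "symmetric_tensor m n A \<longleftrightarrow>
     (\<forall>is\<in>index_tuples m n. \<forall>js. mset js = mset is \<longrightarrow> A js = A is)"

definition strongly_pos_def_tensor :: "nat \<Rightarrow> nat \<Rightarrow> (nat list \<Rightarrow> real) \<Rightarrow> bool" where
  "strongly_pos_def_tensor m n A \<longleftrightarrow>
     odd m \<and> symmetric_tensor m n A \<and>
     (\<forall>x :: nat \<Rightarrow> real. (\<exists>i<n. x i \<noteq> 0) \<longrightarrow> (\<forall>i<n. tensor_apply m n A x i > 0))"

end

theory Submission imports Defs begin

lemma index_tuples_0: "index_tuples 0 n = {[]}"
  by (auto simp: index_tuples_def)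

lemma index_tuples_Suc: "index_tuples (Suc k) n = (\<lambda>(a,is). a#is) ` ({..<n} \<times> index_tuples k n)"
  by (auto simp: index_tuples_def length_Suc_conv image_iff)

lemma finite_index_tuples: "finite (index_tuples k n)"
proof -
  have "index_tuples k n = {xs. set xs \<subseteq> {..<n} \<and> length xs = k}" by (auto simp: index_tuples_def)
  then show ?thesis using finite_lists_length_eq[of "{..<n}" k] by simp
qed

lemma power_sum_lists:
  fixes f :: "nat \<Rightarrow> real"
  shows "(\<Sum>j<n. f j)^k = (\<Sum>is\<in>index_tuples k n. \<Prod>j\<leftarrow>is. f j)"
proof (induction k)
  case 0
  then show ?case by (simp add: index_tuples_0)
next
  case (Suc k)
  have inj: "inj_on (\<lambda>(a,is). a#is) ({..<n} \<times> index_tuples k n)"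
    by (auto simp: inj_on_def)
  have "(\<Sum>j<n. f j)^Suc k = (\<Sum>a<n. f a) * (\<Sum>is\<in>index_tuples k n. \<Prod>j\<leftarrow>is. f j)"
    using Suc by simp
  also have "\<dots> = (\<Sum>a<n. \<Sum>is\<in>index_tuples k n. f a * (\<Prod>j\<leftarrow>is. f j))"
    by (simp add: sum_product)
  also have "\<dots> = (\<Sum>p\<in>{..<n} \<times> index_tuples k n. f (fst p) * (\<Prod>j\<leftarrow>snd p. f j))"
    by (simp add: sum.cartesian_product case_prod_beta)
  also have "\<dots> = (\<Sum>is\<in>index_tuples (Suc k) n. \<Prod>j\<leftarrow>is. f j)"
    unfolding index_tuples_Suc by (subst sum.reindex[OF inj]) (simp add: case_prod_beta)
  finally show ?case .
qed

lemma prod_exp_list: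
  fixes x c :: "nat \<Rightarrow> real"
  shows "(\<Prod>j\<leftarrow>is. x j * exp (- c j * t)) = (\<Prod>j\<leftarrow>is. x j) * exp (- (\<Sum>j\<leftarrow>is. c j) * t)"
  by (induction "is") (simp_all add: algebra_simps exp_diff exp_minus divide_inverse)

lemma exp_decay: "(d::real) > 0 \<Longrightarrow> ((\<lambda>t. exp (- d * t)) \<longlongrightarrow> 0) at_top"
proof -
  assume d: "d > 0"
  have "filterlim (\<lambda>t. - d * t) at_bot at_top"
  proof -
    have "filterlim (\<lambda>t. d * t) at_top at_top"
      using d by (intro filterlim_tendsto_pos_mult_at_top[OF tendsto_const] filterlim_ident)
    then show ?thesis by (simp add: filterlim_uminus_at_bot)
  qed
  then show ?thesis using exp_at_bot filterlim_compose by blast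
qed

lemma exp_indep:
  fixes x c :: "nat \<Rightarrow> real"
  assumes nz: "\<exists>i<n. x i \<noteq> 0" and dist: "\<forall>i<n. \<forall>j<n. i \<noteq> j \<longrightarrow> c i \<noteq> c j"
  shows "\<exists>t\<ge>0. (\<Sum>j<n. x j * exp (- c j * t)) \<noteq> 0"
proof (rule ccontr)
  assume H: "\<not> ?thesis"
  define S where "S = {j. j<n \<and> x j \<noteq> 0}"
  have fS: "finite S" "S \<noteq> {}" using nz by (auto simp: S_def)
  define k where "k = (SOME k. k \<in> S \<and> c k = Min (c ` S))"
  have "\<exists>k. k \<in> S \<and> c k = Min (c ` S)"
  proof -
    have "Min (c ` S) \<in> c ` S" using fS by (intro Min_in) auto
    then show ?thesis by auto
  qed
  then have k: "k \<in> S" "c k = Min (c ` S)" unfolding k_def by (metis (mono_tags, lifting) someI_ex)+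
  have kle: "c k \<le> c j" if "j \<in> S" for j using k fS that by simp
  define f where "f = (\<lambda>t. x k + (\<Sum>j\<in>S-{k}. x j * exp (- (c j - c k) * t)))"
  have f0: "f t = 0" if t: "t \<ge> 0" for t
  proof -
    have "0 = exp (c k * t) * (\<Sum>j<n. x j * exp (- c j * t))" using H t by auto
    also have "(\<Sum>j<n. x j * exp (- c j * t)) = (\<Sum>j\<in>S. x j * exp (- c j * t))"
      by (rule sum.mono_neutral_right) (auto simp: S_def)
    also have "exp (c k * t) * (\<Sum>j\<in>S. x j * exp (- c j * t)) = (\<Sum>j\<in>S. x j * exp (- (c j - c k) * t))"
      by (simp add: sum_distrib_left algebra_simps exp_diff exp_minus divide_inverse)
    also have "\<dots> = f t" unfolding f_def using fS k by (simp add: sum.remove)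
    finally show ?thesis by simp
  qed
  have lim: "(f \<longlongrightarrow> x k + 0) at_top"
    unfolding f_def
  proof (intro tendsto_add tendsto_const tendsto_null_sum tendsto_mult_right_zero exp_decay)
    fix j assume j: "j \<in> S - {k}"
    then have "j < n" "k < n" "j \<noteq> k" using k by (auto simp: S_def)
    then have "c j \<noteq> c k" using dist by blast
    then show "0 < c j - c k" using kle[of j] j by auto
  qed
  have ev: "eventually (\<lambda>t. 0 = f t) at_top"
    using eventually_ge_at_top[of "0::real"] by eventually_elim (simp add: f0)
  have "((\<lambda>t::real. 0) \<longlongrightarrow> x k) at_top" proof -
    have "(f \<longlongrightarrow> x k) at_top" using lim by simp
    then show ?thesis using tendsto_cong[OF ev, of "x k"] by blast
  qed
  then have "x k = 0" using tendsto_unique[OF trivial_limit_at_top_linorder tendsto_const] by fastforce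
  then show False using k by (simp add: S_def)
qed

theorem corollary3p6:
  fixes m n :: nat and c :: "nat \<Rightarrow> real"
  assumes "odd m" and "m \<ge> 3" and "n \<ge> 2"
    and "\<forall>i<n. c i > 0"
    and "\<forall>i<n. \<forall>j<n. i \<noteq> j \<longrightarrow> c i \<noteq> c j"
  shows "strongly_pos_def_tensor m n (\<lambda>is. 1 / (\<Sum>k\<leftarrow>is. c k))"
proof -
  have sym: "symmetric_tensor m n (\<lambda>is. 1 / (\<Sum>k\<leftarrow>is. c k))"
    unfolding symmetric_tensor_def
  proof (intro ballI allI impI)
    fix "is" js :: "nat list" assume "mset js = mset is"
    then have "(\<Sum>k\<leftarrow>js. c k) = (\<Sum>k\<leftarrow>is. c k)"
      by (metis mset_map sum_mset_sum_list)
    then show "1 / (\<Sum>k\<leftarrow>js. c k) = 1 / (\<Sum>k\<leftarrow>is. c k)" by simp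
  qed
  have pos: "tensor_apply m n (\<lambda>is. 1 / (\<Sum>k\<leftarrow>is. c k)) x i > 0"
    if nz: "\<exists>i<n. x i \<noteq> 0" and i: "i < n" for x i
  proof -
    define IT where "IT = index_tuples (m - 1) n"
    define F where "F = (\<lambda>t::real. \<Sum>j<n. x j * exp (- c j * t))"
    define g where "g = (\<lambda>t::real. exp (- c i * t) * F t ^ (m - 1))"
    define s where "s = (\<lambda>is. c i + (\<Sum>k\<leftarrow>is. c k))"
    define T where "T = tensor_apply m n (\<lambda>is. 1 / (\<Sum>k\<leftarrow>is. c k)) x i"
    have spos: "s is > 0" if "is \<in> IT" for "is"
    proof -
      have "(\<Sum>k\<leftarrow>is. c k) \<ge> 0" using that assms(4)
        by (intro sum_list_nonneg) (auto simp: IT_def index_tuples_def less_imp_le)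
      then show ?thesis using assms(4) i by (simp add: s_def add_pos_nonneg)
    qed
    have gexp: "g t = (\<Sum>is\<in>IT. (\<Prod>j\<leftarrow>is. x j) * exp (- s is * t))" for t
    proof -
      have "g t = exp (- c i * t) * (\<Sum>is\<in>IT. \<Prod>j\<leftarrow>is. x j * exp (- c j * t))"
        unfolding g_def F_def IT_def by (simp only: power_sum_lists)
      also have "\<dots> = (\<Sum>is\<in>IT. (\<Prod>j\<leftarrow>is. x j) * (exp (- c i * t) * exp (- (\<Sum>j\<leftarrow>is. c j) * t)))"
        unfolding sum_distrib_left prod_exp_list by (simp add: algebra_simps)
      also have "\<dots> = (\<Sum>is\<in>IT. (\<Prod>j\<leftarrow>is. x j) * exp (- s is * t))"
        by (simp add: s_def exp_add[symmetric] algebra_simps)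
      finally show ?thesis .
    qed
    have Tsum: "T = (\<Sum>is\<in>IT. (\<Prod>j\<leftarrow>is. x j) * (exp (- s is * 0) / s is))"
      unfolding T_def tensor_apply_def IT_def s_def by (simp add: algebra_simps)
    have intT: "(g has_integral T) {0..}"
      unfolding gexp[abs_def] Tsum
      by (intro has_integral_sum finite_index_tuples has_integral_mult_right
          has_integral_exp_minus_to_infinity spos) (simp_all add: IT_def finite_index_tuples)
    obtain t0 where t0: "t0 \<ge> 0" "F t0 \<noteq> 0"
      using exp_indep[OF nz assms(5)] unfolding F_def by blast
    have ev: "even (m - 1)" using assms(1,2) by simp
    have gpos: "g t0 > 0" using t0 ev by (simp add: g_def zero_less_power_eq)
    have gnn: "g t \<ge> 0" for t using ev by (simp add: g_def zero_le_even_power)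
    have cont: "continuous_on {0..t0+1} g" unfolding g_def F_def by (intro continuous_intros)
    have intJ: "(g has_integral integral {0..t0+1} g) {0..t0+1}"
      using cont by (intro integrable_integral integrable_continuous_real)
    define J where "J = integral {0..t0+1} g"
    have J0: "J \<ge> 0" using has_integral_nonneg[OF intJ] gnn unfolding J_def by blast
    have "J \<noteq> 0"
    proof
      assume "J = 0"
      then have "(g has_integral 0) (cbox 0 (t0+1))" using intJ by (simp add: J_def)
      then have "g t0 = 0" using cont t0
        by (intro has_integral_0_cbox_imp_0[where x=t0]) (auto simp: gnn)
      then show False using gpos by simp
    qed
    have "J \<le> T" using has_integral_subset_le[OF _ intJ intT] gnn unfolding J_def by auto
    then show ?thesis using J0 \<open>J \<noteq> 0\<close> unfolding T_def by simp
  qed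
  show ?thesis unfolding strongly_pos_def_tensor_def using assms(1) sym pos by blast
qed

end
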